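(* Assume CH. Then for every sequence $\bar p=\langle p_\delta:\delta<\omega_1\rangle$ of partitions $p_\delta:[\omega_1]^2\to\omega$ the following all hold: $\aleph_1\nrightarrow_{\bar p}[\aleph_1]^2_{\aleph_1}$; $\aleph_1\nrightarrow_{\bar p}[\aleph_1\circledast\aleph_1]^2_{\aleph_1}$; $\aleph_1\nrightarrow_{\bar p}[\aleph_0\circledast\aleph_1/1\circledast\aleph_1]^2_{\aleph_1}$; $\Pr_1(\aleph_1,\aleph_1,\aleph_1,\aleph_0)_{\bar p}$; $\Pr_0(\aleph_1,\aleph_1,\aleph_1,\aleph_0)_{\bar p}$.
   Context: For $f:[\kappa]^2\to\lambda$ and $p:[\kappa]^2\to\theta$, $X\subseteq[\kappa]^2$ is $(f,p)$-strong if for every $\zeta:\theta\to\lambda$ there is $\{\alpha,\beta\}\in X$ with $f(\alpha,\beta)=\zeta(p(\alpha,\beta))$. $A\circledast B=\{\{\alpha,\beta\}:\alpha<\beta,\ \alpha\in A,\ \beta\in B\}$. For a partition $p$: $\kappa\nrightarrow_p[\mu]^2_\lambda$ means there is $f:[\kappa]^2\to\lambda$ with $[A]^2$ $(f,p)$-strong for all $A\in[\kappa]^\mu$; $\kappa\nrightarrow_p[\mu_1\circledast\mu_2]^2_\lambda$ means there is $f$ with $A\circledast B$ $(f,p)$-strong for all $A\in[\kappa]^{\mu_1},B\in[\kappa]^{\mu_2}$; $\aleph_1\nrightarrow_p[\aleph_0\circledast\aleph_1/1\circledast\aleph_1]^2_\lambda$ means there is $f:[\omega_1]^2\to\lambda$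 such that for every countably infinite $A\subseteq\omega_1$ and uncountable $B\subseteq\omega_1$ there is $\alpha\in A$ with $\{\alpha\}\circledast B$ $(f,p)$-strong. $\Pr_1(\kappa,\mu,\lambda,\chi)_p$: there is $f$ such that for every $\xi<\chi$, every family $\mathcal A\subseteq[\kappa]^{<\xi}$ of $\mu$ pairwise disjoint nonempty sets and every $\zeta\in\lambda^\theta$ there are $a,b\in\mathcal A$, $\max a<\min b$, with $f(\alpha,\beta)=\zeta(p(\alpha,\beta))$ for all $\alpha\in a,\beta\in b$. $\Pr_0(\kappa,\mu,\lambda,\chi)_p$: there is $f$ such that for every $\xi<\chi$, every pairwise disjoint $\mathcal A\subseteq[\kappa]^\xi$ with $|\mathcal A|=\mu$ and every matrix $\langle\zeta_{i,j}:i,j<\xi\rangle$ of elements of $\lambda^\theta$ there are $a,b\in\mathcal A$ with $\max a<\min b$ and $f(a(i),b(j))=\zeta_{i,j}(p(a(i),b(j)))$ for all $i,j<\xi$ ($a(i)$ the $i$-th element of $a$ in increasing order). With a sequence $\bar p=\langle p_\delta\rangle$: a single $f$ witnesses the symbol for every $p_\delta$. *)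

theory Defs
  imports Complex_Main "HOL-Library.Countable_Set"
begin

text \<open>omega_1 is represented by a wellorder type 'a which is uncountable and all of whose
proper initial segments are countable.  A pair {alpha,beta} with alpha < beta is represented
by the ordered pair (alpha,beta); colourings and partitions are curried functions, only their
values at alpha < beta matter.\<close>

definition omega1_type :: "'a::wellorder itself \<Rightarrow> bool" where
  "omega1_type _ \<longleftrightarrow> uncountable (UNIV :: 'a set) \<and> (\<forall>x::'a. countable {y. y < x})"

definition CH :: "'a itself \<Rightarrow> bool" where
  "CH _ \<longleftrightarrow> (\<exists>g :: real \<Rightarrow> 'a. bij g)"

definition circledast :: "'a::linorder set \<Rightarrow> 'a set \<Rightarrow> ('a \<times> 'a) set" (infixl "\<circledast>" 70) where
  "A \<circledast> B = {(\<alpha>, \<beta>). \<alpha> < \<beta> \<and> \<alpha> \<in> A \<and> \<beta> \<in> B}"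

definition strong :: "('a \<Rightarrow> 'a \<Rightarrow> 'l) \<Rightarrow> ('a \<Rightarrow> 'a \<Rightarrow> 't) \<Rightarrow> ('a \<times> 'a) set \<Rightarrow> bool" where
  "strong f p X \<longleftrightarrow> (\<forall>\<zeta> :: 't \<Rightarrow> 'l. \<exists>(\<alpha>, \<beta>) \<in> X. f \<alpha> \<beta> = \<zeta> (p \<alpha> \<beta>))"

text \<open>Symbols for kappa = mu = lambda = aleph_1 (colours in 'a itself), theta = omega,
with a sequence pbar of partitions indexed by delta < omega_1.\<close>

definition neg_sq :: "('a::linorder \<Rightarrow> 'a \<Rightarrow> 'a \<Rightarrow> nat) \<Rightarrow> bool" where
  "neg_sq pbar \<longleftrightarrow> (\<exists>f :: 'a \<Rightarrow> 'a \<Rightarrow> 'a. \<forall>\<delta> A.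
      uncountable A \<longrightarrow> strong f (pbar \<delta>) (A \<circledast> A))"

definition neg_rect :: "('a::linorder \<Rightarrow> 'a \<Rightarrow> 'a \<Rightarrow> nat) \<Rightarrow> bool" where
  "neg_rect pbar \<longleftrightarrow> (\<exists>f :: 'a \<Rightarrow> 'a \<Rightarrow> 'a. \<forall>\<delta> A B.
      uncountable A \<longrightarrow> uncountable B \<longrightarrow> strong f (pbar \<delta>) (A \<circledast> B))"

definition neg_one_rect :: "('a::linorder \<Rightarrow> 'a \<Rightarrow> 'a \<Rightarrow> nat) \<Rightarrow> bool" where
  "neg_one_rect pbar \<longleftrightarrow> (\<exists>f :: 'a \<Rightarrow> 'a \<Rightarrow> 'a. \<forall>\<delta> A B.
      countable A \<longrightarrow> infinite A \<longrightarrow> uncountable B \<longrightarrow>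
      (\<exists>\<alpha>\<in>A. strong f (pbar \<delta>) ({\<alpha>} \<circledast> B)))"

definition Pr1 :: "('a::linorder \<Rightarrow> 'a \<Rightarrow> 'a \<Rightarrow> nat) \<Rightarrow> bool" where
  "Pr1 pbar \<longleftrightarrow> (\<exists>f :: 'a \<Rightarrow> 'a \<Rightarrow> 'a. \<forall>\<delta> (\<xi>::nat) (\<A>::'a set set) (\<zeta>::nat \<Rightarrow> 'a).
      (\<forall>a\<in>\<A>. finite a \<and> card a < \<xi> \<and> a \<noteq> {}) \<longrightarrow>
      (\<forall>a\<in>\<A>. \<forall>b\<in>\<A>. a \<noteq> b \<longrightarrow> a \<inter> b = {}) \<longrightarrow>
      uncountable \<A> \<longrightarrow>
      (\<exists>a\<in>\<A>. \<exists>b\<in>\<A>. Max a < Min b \<and>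
         (\<forall>\<alpha>\<in>a. \<forall>\<beta>\<in>b. f \<alpha> \<beta> = \<zeta> (pbar \<delta> \<alpha> \<beta>))))"

definition Pr0 :: "('a::linorder \<Rightarrow> 'a \<Rightarrow> 'a \<Rightarrow> nat) \<Rightarrow> bool" where
  "Pr0 pbar \<longleftrightarrow> (\<exists>f :: 'a \<Rightarrow> 'a \<Rightarrow> 'a. \<forall>\<delta> (\<xi>::nat) (\<A>::'a set set) (\<zeta>::nat \<Rightarrow> nat \<Rightarrow> nat \<Rightarrow> 'a).
      (\<forall>a\<in>\<A>. finite a \<and> card a = \<xi>) \<longrightarrow>
      (\<forall>a\<in>\<A>. \<forall>b\<in>\<A>. a \<noteq> b \<longrightarrow> a \<inter> b = {}) \<longrightarrow>
      uncountable \<A> \<longrightarrow>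
      (\<exists>a\<in>\<A>. \<exists>b\<in>\<A>. Max a < Min b \<and>
         (\<forall>i<\<xi>. \<forall>j<\<xi>.
            f (sorted_list_of_set a ! i) (sorted_list_of_set b ! j)
              = \<zeta> i j (pbar \<delta> (sorted_list_of_set a ! i) (sorted_list_of_set b ! j)))))"

end

theory Submission imports Defs "HOL-Analysis.Abstract_Topology_2" begin


lemma om_bound:
  assumes "omega1_type TYPE('a::wellorder)" "countable (S::'a set)"
  shows "\<exists>\<gamma>. \<forall>x\<in>S. x < \<gamma>"
proof (rule ccontr)
  assume "\<not> ?thesis"
  hence "\<forall>\<gamma>. \<exists>x\<in>S. \<gamma> \<le> x" by (auto simp: not_less)
  hence "UNIV \<subseteq> (\<Union>x\<in>S. {y. y < x} \<union> {x})" by (auto simp: order_le_less)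
  moreover have "countable (\<Union>x\<in>S. {y. y < x} \<union> {x})"
    using assms unfolding omega1_type_def by auto
  ultimately show False using assms unfolding omega1_type_def
    by (metis countable_subset)
qed

lemma om_above:
  assumes "omega1_type TYPE('a::wellorder)" "uncountable (A::'a set)"
  shows "\<exists>x\<in>A. \<gamma> < x"
proof (rule ccontr)
  assume "\<not> ?thesis"
  hence "A \<subseteq> {y. y < \<gamma>} \<union> {\<gamma>}" by (auto simp: not_less order_le_less)
  moreover have "countable ({y. y < \<gamma>} \<union> {\<gamma>})" using assms(1) unfolding omega1_type_def by auto
  ultimately show False using assms(2) countable_subset by blast
qed

lemma om_fam_above:
  assumes "omega1_type TYPE('a::wellorder)" "uncountable (\<A>::'a set set)"
    and "\<forall>a\<in>\<A>. \<forall>b\<in>\<A>. a \<noteq> b \<longrightarrow> a \<inter> b = {}"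
  shows "\<exists>b\<in>\<A>. \<forall>x\<in>b. \<gamma> < x"
proof (rule ccontr)
  assume "\<not> ?thesis"
  hence h: "\<forall>b\<in>\<A>. \<exists>x\<in>b. x \<le> \<gamma>" by (auto simp: not_less)
  define w where "w b = (SOME x. x \<in> b \<and> x \<le> \<gamma>)" for b
  have w: "w b \<in> b \<and> w b \<le> \<gamma>" if "b \<in> \<A>" for b
    using h that unfolding w_def by (metis (mono_tags, lifting) someI_ex)
  have "inj_on w \<A>"
    by (rule inj_onI) (metis w assms(3) disjoint_iff)
  moreover have "w ` \<A> \<subseteq> {y. y < \<gamma>} \<union> {\<gamma>}" using w by (auto simp: order_le_less)
  moreover have "countable ({y. y < \<gamma>} \<union> {\<gamma>})" using assms(1) unfolding omega1_type_def by auto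
  ultimately have "countable \<A>"
    by (meson countable_image_inj_on countable_subset)
  thus False using assms(2) by simp
qed



definition code :: "('a::linorder \<Rightarrow> nat set) \<Rightarrow> (nat \<Rightarrow> 'a set) \<times> 'a \<times> (nat\<Rightarrow>nat\<Rightarrow>nat\<Rightarrow>nat\<Rightarrow>'a) \<Rightarrow> nat list set" where
  "code h r = (case r of (c, \<delta>, Z) \<Rightarrow> {xs.
     (length xs = 2 \<and> xs ! 1 = length (sorted_list_of_set (c (xs!0))))
   \<or> (length xs = 3 \<and> xs!1 < length (sorted_list_of_set (c (xs!0))) \<and> xs!2 \<in> h (sorted_list_of_set (c (xs!0)) ! (xs!1)))
   \<or> (length xs = 1 \<and> xs!0 \<in> h \<delta>)
   \<or> (length xs = 5 \<and> xs!4 \<in> h (Z (xs!0) (xs!1) (xs!2) (xs!3)))})"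

lemma code_mem:
  "[n, m] \<in> code h (c, d, Z) \<longleftrightarrow> m = length (sorted_list_of_set (c n))"
  "[n, i, x] \<in> code h (c, d, Z) \<longleftrightarrow> i < length (sorted_list_of_set (c n)) \<and> x \<in> h (sorted_list_of_set (c n) ! i)"
  "[x] \<in> code h (c, d, Z) \<longleftrightarrow> x \<in> h d"
  "[n, i, j, l, x] \<in> code h (c, d, Z) \<longleftrightarrow> x \<in> h (Z n i j l)"
  by (simp_all add: code_def)

lemma code_inj:
  assumes h: "inj h" and f1: "\<forall>n. finite (c1 n)" and f2: "\<forall>n. finite (c2 n)"
    and eq: "code h (c1, d1, Z1) = code h (c2, d2, Z2)"
  shows "(c1, d1, Z1) = (c2, d2, Z2)"
proof -
  let ?L1 = "\<lambda>n. sorted_list_of_set (c1 n)" and ?L2 = "\<lambda>n. sorted_list_of_set (c2 n)"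
  have len: "length (?L1 n) = length (?L2 n)" for n
  proof -
    have "[n, length (?L1 n)] \<in> code h (c2, d2, Z2)" unfolding eq[symmetric] code_mem by auto
    thus ?thesis unfolding code_mem by auto
  qed
  have nth: "?L1 n ! i = ?L2 n ! i" if "i < length (?L1 n)" for n i
  proof -
    have "h (?L1 n ! i) = h (?L2 n ! i)"
    proof (intro set_eqI iffI)
      fix x assume "x \<in> h (?L1 n ! i)"
      hence "[n, i, x] \<in> code h (c2, d2, Z2)" unfolding eq[symmetric] code_mem using that by auto
      thus "x \<in> h (?L2 n ! i)" unfolding code_mem by auto
    next
      fix x assume "x \<in> h (?L2 n ! i)"
      hence "[n, i, x] \<in> code h (c1, d1, Z1)" unfolding eq code_mem using that len by auto
      thus "x \<in> h (?L1 n ! i)" unfolding code_mem by auto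
    qed
    thus ?thesis using h by (simp add: inj_eq)
  qed
  have "?L1 n = ?L2 n" for n using len nth by (metis nth_equalityI)
  hence c: "c1 = c2" using f1 f2 by (metis ext sorted_list_of_set.set_sorted_key_list_of_set)
  have "h d1 = h d2"
  proof (intro set_eqI iffI)
    fix x assume "x \<in> h d1"
    hence "[x] \<in> code h (c2, d2, Z2)" unfolding eq[symmetric] code_mem by auto
    thus "x \<in> h d2" unfolding code_mem by auto
  next
    fix x assume "x \<in> h d2"
    hence "[x] \<in> code h (c1, d1, Z1)" unfolding eq code_mem by auto
    thus "x \<in> h d1" unfolding code_mem by auto
  qed
  hence d: "d1 = d2" using h by (simp add: inj_eq)
  have "h (Z1 n i j l) = h (Z2 n i j l)" for n i j l
  proof (intro set_eqI iffI)
    fix x assume "x \<in> h (Z1 n i j l)"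
    hence "[n, i, j, l, x] \<in> code h (c2, d2, Z2)" unfolding eq[symmetric] code_mem by auto
    thus "x \<in> h (Z2 n i j l)" unfolding code_mem by auto
  next
    fix x assume "x \<in> h (Z2 n i j l)"
    hence "[n, i, j, l, x] \<in> code h (c1, d1, Z1)" unfolding eq code_mem by auto
    thus "x \<in> h (Z1 n i j l)" unfolding code_mem by auto
  qed
  hence "Z1 = Z2" using h by (simp add: inj_eq fun_eq_iff)
  thus ?thesis using c d by simp
qed

lemma enc_exists:
  assumes "CH TYPE('a::wellorder)"
  shows "\<exists>T :: 'a \<Rightarrow> (nat \<Rightarrow> 'a set) \<times> 'a \<times> (nat\<Rightarrow>nat\<Rightarrow>nat\<Rightarrow>nat\<Rightarrow>'a).
           \<forall>c \<delta> Z. (\<forall>n. finite (c n)) \<longrightarrow> (\<exists>\<eta>. T \<eta> = (c, \<delta>, Z))"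
proof -
  obtain g :: "real \<Rightarrow> 'a" where g: "bij g" using assms unfolding CH_def by blast
  obtain q :: "nat set \<Rightarrow> real" where q: "bij_betw q UNIV UNIV"
    using nat_sets_eqpoll_reals unfolding eqpoll_def by blast
  define k where "k = g \<circ> q"
  have kb: "bij k" unfolding k_def using g q by (simp add: bij_comp)
  define h where "h = inv k"
  have hi: "inj h" unfolding h_def using kb by (simp add: bij_imp_bij_inv bij_is_inj)
  define enc where "enc r = k (to_nat ` code h r)" for r :: "(nat \<Rightarrow> 'a set) \<times> 'a \<times> (nat\<Rightarrow>nat\<Rightarrow>nat\<Rightarrow>nat\<Rightarrow>'a)"
  define D where "D = {r :: (nat \<Rightarrow> 'a set) \<times> 'a \<times> (nat\<Rightarrow>nat\<Rightarrow>nat\<Rightarrow>nat\<Rightarrow>'a). \<forall>n. finite (fst r n)}"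
  have "inj_on enc D"
  proof (rule inj_onI)
    fix r1 r2 assume r: "r1 \<in> D" "r2 \<in> D" "enc r1 = enc r2"
    obtain c1 d1 Z1 where r1: "r1 = (c1, d1, Z1)" by (cases r1) auto
    obtain c2 d2 Z2 where r2: "r2 = (c2, d2, Z2)" by (cases r2) auto
    have "to_nat ` code h r1 = to_nat ` code h r2"
      using r(3) kb unfolding enc_def by (simp add: bij_is_inj inj_eq)
    hence "code h r1 = code h r2" by (simp add: inj_image_eq_iff)
    thus "r1 = r2" using code_inj[OF hi] r r1 r2 unfolding D_def by auto
  qed
  hence inv: "\<forall>r\<in>D. inv_into D enc (enc r) = r" by simp
  show ?thesis
  proof (intro exI[of _ "inv_into D enc"] allI impI)
    fix c :: "nat \<Rightarrow> 'a set" and \<delta> :: 'a and Z :: "nat\<Rightarrow>nat\<Rightarrow>nat\<Rightarrow>nat\<Rightarrow>'a"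
    assume "\<forall>n. finite (c n)"
    hence "(c, \<delta>, Z) \<in> D" unfolding D_def by simp
    thus "\<exists>\<eta>. inv_into D enc \<eta> = (c, \<delta>, Z)" using inv by blast
  qed
qed



abbreviation srt :: "'a::linorder set \<Rightarrow> 'a list" where "srt \<equiv> sorted_list_of_set"

definition goodc :: "(nat \<Rightarrow> 'a set) \<Rightarrow> bool" where
  "goodc c \<longleftrightarrow> (\<forall>n. finite (c n) \<and> c n \<noteq> {}) \<and> (\<forall>n m. n \<noteq> m \<longrightarrow> c n \<inter> c m = {})"

definition sat :: "('a::linorder \<Rightarrow> 'a \<Rightarrow> 'a \<Rightarrow> nat) \<Rightarrow> ('a \<Rightarrow> 'a \<Rightarrow> 'a) \<Rightarrow> (nat \<Rightarrow> 'a set) \<Rightarrow> 'a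
   \<Rightarrow> (nat\<Rightarrow>nat\<Rightarrow>nat\<Rightarrow>nat\<Rightarrow>'a) \<Rightarrow> nat \<Rightarrow> nat \<Rightarrow> 'a \<Rightarrow> bool" where
  "sat P F c \<delta> Z n j \<beta> \<longleftrightarrow> (\<forall>i<card (c n). F \<beta> (srt (c n) ! i) = Z n i j (P \<delta> (srt (c n) ! i) \<beta>))"

definition Nset :: "('a::linorder \<Rightarrow> 'a \<Rightarrow> 'a \<Rightarrow> nat) \<Rightarrow> ('a \<Rightarrow> (nat \<Rightarrow> 'a set) \<times> 'a \<times> (nat\<Rightarrow>nat\<Rightarrow>nat\<Rightarrow>nat\<Rightarrow>'a))
   \<Rightarrow> ('a \<Rightarrow> 'a \<Rightarrow> 'a) \<Rightarrow> 'a \<times> 'a list \<Rightarrow> nat set" where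
  "Nset P T F t = (case T (fst t) of (c, \<delta>, Z) \<Rightarrow>
     if goodc c then {n. \<forall>j<length (snd t). sat P F c \<delta> Z n j (snd t ! j)} else {})"

definition V :: "'a::linorder \<Rightarrow> ('a \<times> 'a list) set" where
  "V \<beta> = {t. fst t < \<beta> \<and> set (snd t) \<subseteq> {x. x < \<beta>}}"

definition u :: "'a::linorder \<Rightarrow> nat \<Rightarrow> 'a \<times> 'a list" where
  "u \<beta> m = fst (from_nat_into (V \<beta> \<times> (UNIV::nat set)) m)"

definition pick where
  "pick P T F \<beta> m U = (let t = u \<beta> m; c = fst (T (fst t)) in
     if \<exists>n\<in>Nset P T F t. c n \<inter> U = {} then Some (SOME n. n \<in> Nset P T F t \<and> c n \<inter> U = {}) else None)"

definition claim where
  "claim P T F \<beta> m U = (case pick P T F \<beta> m U of None \<Rightarrow> {} | Some n \<Rightarrow> fst (T (fst (u \<beta> m))) n)"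

primrec Uc where
  "Uc P T F \<beta> 0 = {}"
| "Uc P T F \<beta> (Suc m) = Uc P T F \<beta> m \<union> claim P T F \<beta> m (Uc P T F \<beta> m)"

definition K where "K P T F \<beta> m = claim P T F \<beta> m (Uc P T F \<beta> m)"

definition colval :: "('a::linorder \<Rightarrow> 'a \<Rightarrow> 'a \<Rightarrow> nat) \<Rightarrow> ('a \<Rightarrow> (nat \<Rightarrow> 'a set) \<times> 'a \<times> (nat\<Rightarrow>nat\<Rightarrow>nat\<Rightarrow>nat\<Rightarrow>'a))
   \<Rightarrow> ('a \<Rightarrow> 'a \<Rightarrow> 'a) \<Rightarrow> 'a \<Rightarrow> 'a \<Rightarrow> 'a" where
  "colval P T F \<beta> \<alpha> = (if \<exists>m. \<alpha> \<in> K P T F \<beta> m then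
     (let m = SOME m. \<alpha> \<in> K P T F \<beta> m; t = u \<beta> m; n = the (pick P T F \<beta> m (Uc P T F \<beta> m)) in
      case T (fst t) of (c, \<delta>, Z) \<Rightarrow>
        Z n (THE i. i < card (c n) \<and> srt (c n) ! i = \<alpha>) (length (snd t)) (P \<delta> \<alpha> \<beta>))
     else \<alpha>)"

lemma pick_Some:
  assumes "pick P T F \<beta> m U = Some n"
  shows "n \<in> Nset P T F (u \<beta> m) \<and> fst (T (fst (u \<beta> m))) n \<inter> U = {}"
proof -
  let ?t = "u \<beta> m"
  have e: "\<exists>n\<in>Nset P T F ?t. fst (T (fst ?t)) n \<inter> U = {}"
    using assms unfolding pick_def Let_def by (auto split: if_splits)
  hence "n = (SOME n. n \<in> Nset P T F ?t \<and> fst (T (fst ?t)) n \<inter> U = {})"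
    using assms unfolding pick_def Let_def by auto
  thus ?thesis using e by (metis (mono_tags, lifting) someI_ex)
qed

lemma Nset_good: "n \<in> Nset P T F t \<Longrightarrow> goodc (fst (T (fst t)))"
  unfolding Nset_def by (cases "T (fst t)") (auto split: if_splits)

lemma claim_finite: "finite (claim P T F \<beta> m U)"
proof (cases "pick P T F \<beta> m U")
  case (Some n)
  then show ?thesis using pick_Some[OF Some] Nset_good unfolding claim_def goodc_def by fastforce
qed (simp add: claim_def)

lemma Uc_finite: "finite (Uc P T F \<beta> m)"
  by (induction m) (auto simp: claim_finite)

lemma Uc_mono: "m \<le> m' \<Longrightarrow> Uc P T F \<beta> m \<subseteq> Uc P T F \<beta> m'"
  by (induction m' rule: dec_induct) auto

lemma K_disj_U: "K P T F \<beta> m \<inter> Uc P T F \<beta> m = {}"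
proof (cases "pick P T F \<beta> m (Uc P T F \<beta> m)")
  case (Some n)
  then show ?thesis using pick_Some[OF Some] unfolding K_def claim_def by auto
qed (simp add: K_def claim_def)

lemma K_sub_U: "K P T F \<beta> m \<subseteq> Uc P T F \<beta> (Suc m)"
  unfolding K_def by auto

lemma K_disj:
  assumes "m \<noteq> m'" shows "K P T F \<beta> m \<inter> K P T F \<beta> m' = {}"
proof -
  have *: "K P T F \<beta> a \<inter> K P T F \<beta> b = {}" if "a < b" for a b
  proof -
    have "Uc P T F \<beta> (Suc a) \<subseteq> Uc P T F \<beta> b" by (rule Uc_mono) (use that in simp)
    hence "K P T F \<beta> a \<subseteq> Uc P T F \<beta> b" using K_sub_U[of P T F \<beta> a] by blast
    thus ?thesis using K_disj_U[of P T F \<beta> b] by blast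
  qed
  show ?thesis using assms * by (metis Int_commute linorder_neqE_nat)
qed

lemma V_countable:
  assumes "omega1_type TYPE('a::wellorder)"
  shows "countable (V (\<beta>::'a))"
proof -
  have c: "countable {x::'a. x < \<beta>}" using assms unfolding omega1_type_def by auto
  have "V \<beta> \<subseteq> {x. x < \<beta>} \<times> lists {x. x < \<beta>}" unfolding V_def by auto
  moreover have "countable ({x. x < \<beta>} \<times> lists {x. x < \<beta>})" using c by auto
  ultimately show ?thesis by (rule countable_subset)
qed

lemma finite_meet:
  assumes "goodc c" "finite U"
  shows "finite {n. c n \<inter> U \<noteq> {}}"
proof -
  have sub: "{n. c n \<inter> U \<noteq> {}} \<subseteq> (\<Union>x\<in>U. {n. x \<in> c n})" by auto
  have "finite {n. x \<in> c n}" for x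
  proof (cases "\<exists>n0. x \<in> c n0")
    case True
    then obtain n0 where n0: "x \<in> c n0" by blast
    have "{n. x \<in> c n} \<subseteq> {n0}"
    proof
      fix n assume "n \<in> {n. x \<in> c n}"
      hence "x \<in> c n" by simp
      with n0 assms(1) show "n \<in> {n0}" unfolding goodc_def by blast
    qed
    thus ?thesis using finite_subset by blast
  qed simp
  thus ?thesis using sub assms(2) by (meson finite_UN_I finite_subset)
qed

lemma column:
  assumes om: "omega1_type TYPE('a::wellorder)"
    and t: "t \<in> V (\<beta>::'a)" and inf: "infinite (Nset P T F t)" and Tt: "T (fst t) = (c, \<delta>, Z)"
  shows "infinite {n \<in> Nset P T F t. \<forall>i<card (c n).
            colval P T F \<beta> (srt (c n) ! i) = Z n i (length (snd t)) (P \<delta> (srt (c n) ! i) \<beta>)}"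
proof -
  have good: "goodc c" using inf Nset_good Tt by (metis finite.emptyI fst_conv ex_in_conv)
  define W where "W = V \<beta> \<times> (UNIV::nat set)"
  have cW: "countable W" unfolding W_def using V_countable[OF om] by auto
  define mk where "mk k = (SOME m. from_nat_into W m = (t, k))" for k
  have mk: "from_nat_into W (mk k) = (t, k)" for k
  proof -
    have "(t, k) \<in> W" using t unfolding W_def by auto
    then obtain m where "from_nat_into W m = (t, k)" using from_nat_into_surj[OF cW] by blast
    thus ?thesis unfolding mk_def by (metis (mono_tags, lifting) someI_ex)
  qed
  have "inj mk" by (rule injI) (metis mk prod.inject)
  hence "infinite (range mk)" by (simp add: range_inj_infinite)
  moreover have "range mk \<subseteq> {m. u \<beta> m = t}" using mk unfolding u_def W_def by auto
  ultimately have Minf: "infinite {m. u \<beta> m = t}" using infinite_super by blast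
  define M where "M = {m. u \<beta> m = t}"
  define nm where "nm m = the (pick P T F \<beta> m (Uc P T F \<beta> m))" for m
  have pickM: "pick P T F \<beta> m (Uc P T F \<beta> m) = Some (nm m)" if "m \<in> M" for m
  proof -
    have "finite {n. c n \<inter> Uc P T F \<beta> m \<noteq> {}}" using finite_meet[OF good Uc_finite] .
    hence "infinite (Nset P T F t - {n. c n \<inter> Uc P T F \<beta> m \<noteq> {}})" using inf by simp
    then obtain n where "n \<in> Nset P T F t" "c n \<inter> Uc P T F \<beta> m = {}"
      by (metis (mono_tags, lifting) DiffE finite.emptyI mem_Collect_eq ex_in_conv)
    hence "\<exists>n\<in>Nset P T F (u \<beta> m). fst (T (fst (u \<beta> m))) n \<inter> Uc P T F \<beta> m = {}"
      using that Tt unfolding M_def by auto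
    thus ?thesis unfolding nm_def pick_def Let_def by auto
  qed
  have nmN: "nm m \<in> Nset P T F t" and nmU: "c (nm m) \<inter> Uc P T F \<beta> m = {}"
    and Km: "K P T F \<beta> m = c (nm m)" if "m \<in> M" for m
    using pick_Some[OF pickM[OF that]] that Tt pickM[OF that] unfolding M_def K_def claim_def by auto
  have "inj_on nm M"
  proof -
    have *: "nm a \<noteq> nm b" if "a \<in> M" "b \<in> M" "a < b" for a b
    proof
      assume eq: "nm a = nm b"
      have "Uc P T F \<beta> (Suc a) \<subseteq> Uc P T F \<beta> b" by (rule Uc_mono) (use that in simp)
      hence "c (nm a) \<subseteq> Uc P T F \<beta> b" using K_sub_U[of P T F \<beta> a] Km[OF that(1)] by blast
      moreover have "c (nm a) \<noteq> {}" using good by (simp add: goodc_def)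
      ultimately show False using nmU[OF that(2)] eq by auto
    qed
    show ?thesis by (rule inj_onI) (metis * linorder_neqE_nat)
  qed
  hence "infinite (nm ` M)" using Minf M_def finite_imageD by blast
  moreover have "nm ` M \<subseteq> {n \<in> Nset P T F t. \<forall>i<card (c n).
            colval P T F \<beta> (srt (c n) ! i) = Z n i (length (snd t)) (P \<delta> (srt (c n) ! i) \<beta>)}"
  proof safe
    fix m assume mM: "m \<in> M"
    show "nm m \<in> Nset P T F t" using nmN[OF mM] .
    fix i assume i: "i < card (c (nm m))"
    define n where "n = nm m"
    define \<alpha> where "\<alpha> = srt (c n) ! i"
    have fin: "finite (c n)" using good unfolding goodc_def by blast
    have dist: "distinct (srt (c n))" by simp
    have len: "length (srt (c n)) = card (c n)" by simp
    have "\<alpha> \<in> c n" unfolding \<alpha>_def using i fin n_def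
      by (metis len nth_mem sorted_list_of_set.set_sorted_key_list_of_set)
    hence aK: "\<alpha> \<in> K P T F \<beta> m" using Km[OF mM] n_def by simp
    have some: "(SOME m'. \<alpha> \<in> K P T F \<beta> m') = m"
    proof (rule some_equality)
      show "\<alpha> \<in> K P T F \<beta> m" by (rule aK)
    next
      fix m' assume "\<alpha> \<in> K P T F \<beta> m'"
      thus "m' = m" using aK K_disj by blast
    qed
    have the_i: "(THE i'. i' < card (c n) \<and> srt (c n) ! i' = \<alpha>) = i"
    proof (rule the_equality)
      show "i < card (c n) \<and> srt (c n) ! i = \<alpha>" using i n_def \<alpha>_def by simp
    next
      fix i' assume "i' < card (c n) \<and> srt (c n) ! i' = \<alpha>"
      thus "i' = i" using i n_def \<alpha>_def dist len nth_eq_iff_index_eq by metis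
    qed
    have um: "u \<beta> m = t" using mM M_def by simp
    have nmeq: "the (pick P T F \<beta> m (Uc P T F \<beta> m)) = n" by (simp add: n_def nm_def)
    have ex: "\<exists>m'. \<alpha> \<in> K P T F \<beta> m'" using aK by blast
    have "colval P T F \<beta> \<alpha> = Z n i (length (snd t)) (P \<delta> \<alpha> \<beta>)"
      unfolding colval_def using ex by (simp add: some um Tt nmeq the_i Let_def)
    thus "colval P T F \<beta> (srt (c (nm m)) ! i) = Z (nm m) i (length (snd t)) (P \<delta> (srt (c (nm m)) ! i) \<beta>)"
      by (simp add: n_def \<alpha>_def)
  qed
  ultimately show ?thesis using infinite_super by blast
qed



definition fcol :: "('a::wellorder \<Rightarrow> 'a \<Rightarrow> 'a \<Rightarrow> nat) \<Rightarrow> ('a \<Rightarrow> (nat \<Rightarrow> 'a set) \<times> 'a \<times> (nat\<Rightarrow>nat\<Rightarrow>nat\<Rightarrow>nat\<Rightarrow>'a))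
   \<Rightarrow> 'a \<Rightarrow> 'a \<Rightarrow> 'a" where
  "fcol P T = wfrec {(x, y). x < y} (\<lambda>F \<beta>. colval P T F \<beta>)"

lemma fcol_eq: "fcol P T \<beta> = colval P T (cut (fcol P T) {(x, y). x < y} \<beta>) \<beta>"
  unfolding fcol_def by (rule wfrec[OF wf])

lemma Nset_cut:
  assumes "set (snd t) \<subseteq> {x. x < \<beta>}"
  shows "Nset P T (cut F {(x, y). x < y} \<beta>) t = Nset P T F t"
proof -
  have "cut F {(x, y). x < y} \<beta> (snd t ! j) = F (snd t ! j)" if "j < length (snd t)" for j
    using assms that nth_mem by (fastforce intro: cut_apply)
  thus ?thesis unfolding Nset_def sat_def by (auto split: prod.splits)
qed

lemma key:
  assumes om: "omega1_type TYPE('a::wellorder)"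
    and T: "\<forall>c \<delta> Z. (\<forall>n. finite (c n)) \<longrightarrow> (\<exists>\<eta>. T \<eta> = (c, \<delta>, Z))"
    and good: "goodc (c :: nat \<Rightarrow> 'a set)"
  shows "\<exists>\<gamma>. (\<forall>n. \<forall>x\<in>c n. x < \<gamma>) \<and> (\<forall>b. sorted_wrt (<) b \<longrightarrow> (\<forall>\<beta>\<in>set b. \<gamma> < \<beta>) \<longrightarrow>
           (\<exists>n. \<forall>j<length b. sat P (fcol P T) c \<delta> Z n j (b ! j)))"
proof -
  have fin: "\<forall>n. finite (c n)" using good unfolding goodc_def by blast
  obtain \<eta> where eta: "T \<eta> = (c, \<delta>, Z)" using T fin by blast
  have "countable (insert \<eta> (\<Union>n. c n))" using fin by (auto intro: countable_finite)
  then obtain \<gamma> where g: "\<forall>x\<in>insert \<eta> (\<Union>n. c n). x < \<gamma>" using om_bound[OF om] by blast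
  have Nset_eq: "Nset P T F (\<eta>, s) = {n. \<forall>j<length s. sat P F c \<delta> Z n j (s ! j)}" for F s
    unfolding Nset_def using eta good by simp
  show ?thesis
  proof (intro exI[of _ \<gamma>] conjI allI impI ballI)
    fix n x assume "x \<in> c n" thus "x < \<gamma>" using g by blast
  next
    fix b :: "'a list" assume sb: "sorted_wrt (<) b" and ab: "\<forall>\<beta>\<in>set b. \<gamma> < \<beta>"
    have "j \<le> length b \<Longrightarrow> infinite (Nset P T (fcol P T) (\<eta>, take j b))" for j
    proof (induction j)
      case 0
      then show ?case by (simp add: Nset_eq)
    next
      case (Suc j)
      hence jl: "j < length b" by simp
      define \<beta> where "\<beta> = b ! j"
      have "\<beta> \<in> set b" unfolding \<beta>_def using jl by simp
      hence "\<eta> < \<beta>" using ab g by force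
      moreover have st: "set (take j b) \<subseteq> {x. x < \<beta>}"
      proof
        fix x assume "x \<in> set (take j b)"
        then obtain k where "k < length (take j b)" "take j b ! k = x" by (meson in_set_conv_nth)
        hence "k < j" "x = b ! k" using jl by auto
        thus "x \<in> {x. x < \<beta>}" using sb jl unfolding \<beta>_def by (simp add: sorted_wrt_nth_less)
      qed
      ultimately have tV: "(\<eta>, take j b) \<in> V \<beta>" unfolding V_def by simp
      have inf: "infinite (Nset P T (cut (fcol P T) {(x, y). x < y} \<beta>) (\<eta>, take j b))"
        using Suc Nset_cut[where t="(\<eta>, take j b)" and \<beta>=\<beta> and F="fcol P T" and P=P and T=T] st by simp
      from column[OF om tV inf] eta
      have X: "infinite {n \<in> Nset P T (cut (fcol P T) {(x, y). x < y} \<beta>) (\<eta>, take j b). \<forall>i<card (c n).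
            colval P T (cut (fcol P T) {(x, y). x < y} \<beta>) \<beta> (srt (c n) ! i) = Z n i j (P \<delta> (srt (c n) ! i) \<beta>)}"
        using jl by simp
      have "{n \<in> Nset P T (cut (fcol P T) {(x, y). x < y} \<beta>) (\<eta>, take j b). \<forall>i<card (c n).
            colval P T (cut (fcol P T) {(x, y). x < y} \<beta>) \<beta> (srt (c n) ! i) = Z n i j (P \<delta> (srt (c n) ! i) \<beta>)}
            \<subseteq> Nset P T (fcol P T) (\<eta>, take (Suc j) b)"
      proof safe
        fix n assume n1: "n \<in> Nset P T (cut (fcol P T) {(x, y). x < y} \<beta>) (\<eta>, take j b)"
          and n2: "\<forall>i<card (c n). colval P T (cut (fcol P T) {(x, y). x < y} \<beta>) \<beta> (srt (c n) ! i) = Z n i j (P \<delta> (srt (c n) ! i) \<beta>)"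
        have "n \<in> Nset P T (fcol P T) (\<eta>, take j b)"
          using n1 Nset_cut[where t="(\<eta>, take j b)" and \<beta>=\<beta> and F="fcol P T" and P=P and T=T] st by simp
        hence a: "\<forall>j'<j. sat P (fcol P T) c \<delta> Z n j' (take j b ! j')"
          unfolding Nset_eq using jl by auto
        have b: "sat P (fcol P T) c \<delta> Z n j \<beta>"
          unfolding sat_def using n2 fcol_eq[of P T \<beta>] by simp
        show "n \<in> Nset P T (fcol P T) (\<eta>, take (Suc j) b)"
          unfolding Nset_eq
        proof (safe)
          fix j' assume "j' < length (take (Suc j) b)"
          hence j': "j' < Suc j" by simp
          show "sat P (fcol P T) c \<delta> Z n j' (take (Suc j) b ! j')"
          proof (cases "j' < j")
            case True thus ?thesis using a by simp
          next
            case False hence "j' = j" using j' by simp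
            thus ?thesis using b jl unfolding \<beta>_def by (simp add: take_Suc_conv_app_nth nth_append)
          qed
        qed
      qed
      thus ?case using X infinite_super by blast
    qed
    from this[of "length b"] have "infinite (Nset P T (fcol P T) (\<eta>, b))" by simp
    then obtain n where "n \<in> Nset P T (fcol P T) (\<eta>, b)" by (metis finite.emptyI ex_in_conv)
    thus "\<exists>n. \<forall>j<length b. sat P (fcol P T) c \<delta> Z n j (b ! j)" using Nset_eq by auto
  qed
qed



lemma srt_single: "srt {x} = [x]" by simp

lemma pr0gen:
  assumes om: "omega1_type TYPE('a::wellorder)"
    and T: "\<forall>c \<delta> Z. (\<forall>n. finite (c n)) \<longrightarrow> (\<exists>\<eta>. T \<eta> = (c, \<delta>, Z))"
    and unc: "uncountable (\<A> :: 'a set set)"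
    and disj: "\<forall>a\<in>\<A>. \<forall>b\<in>\<A>. a \<noteq> b \<longrightarrow> a \<inter> b = {}"
    and fk: "\<forall>a\<in>\<A>. finite a \<and> card a = k" and k: "0 < k"
  shows "\<exists>a\<in>\<A>. \<exists>b\<in>\<A>. Max a < Min b \<and> (\<forall>i<k. \<forall>j<k.
           fcol P T (srt b ! j) (srt a ! i) = \<zeta> i j (P \<delta> (srt a ! i) (srt b ! j)))"
proof -
  have "infinite \<A>" using unc countable_finite by blast
  then obtain c :: "nat \<Rightarrow> 'a set" where ci: "inj c" and cr: "range c \<subseteq> \<A>"
    using infinite_countable_subset by blast
  have ne: "a \<noteq> {}" if "a \<in> \<A>" for a using fk k that by fastforce
  have good: "goodc c" unfolding goodc_def
  proof (intro conjI allI impI)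
    fix n show "finite (c n)" using fk cr by blast
    show "c n \<noteq> {}" using ne cr by blast
  next
    fix n m :: nat assume "n \<noteq> m"
    hence "c n \<noteq> c m" using ci by (simp add: inj_eq)
    thus "c n \<inter> c m = {}" using disj cr by blast
  qed
  obtain \<gamma> where g1: "\<forall>n. \<forall>x\<in>c n. x < \<gamma>" and g2: "\<forall>b. sorted_wrt (<) b \<longrightarrow> (\<forall>\<beta>\<in>set b. \<gamma> < \<beta>) \<longrightarrow>
           (\<exists>n. \<forall>j<length b. sat P (fcol P T) c \<delta> (\<lambda>n. \<zeta>) n j (b ! j))"
    using key[OF om T good, of P \<delta> "\<lambda>n. \<zeta>"] by blast
  obtain b where bA: "b \<in> \<A>" and bg: "\<forall>x\<in>b. \<gamma> < x" using om_fam_above[OF om unc disj] by blast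
  have fb: "finite b" "card b = k" using fk bA by auto
  have "sorted_wrt (<) (srt b)" by simp
  moreover have "\<forall>\<beta>\<in>set (srt b). \<gamma> < \<beta>" using bg fb by simp
  ultimately obtain n where n: "\<forall>j<length (srt b). sat P (fcol P T) c \<delta> (\<lambda>n. \<zeta>) n j (srt b ! j)"
    using g2 by blast
  define a where "a = c n"
  have aA: "a \<in> \<A>" using cr a_def by auto
  have fa: "finite a" "card a = k" using fk aA by auto
  have "Max a < Min b"
  proof -
    have "Max a \<in> a" using fa ne aA by simp
    moreover have "Min b \<in> b" using fb ne bA by simp
    ultimately show ?thesis using g1 bg a_def by fastforce
  qed
  moreover have "\<forall>i<k. \<forall>j<k. fcol P T (srt b ! j) (srt a ! i) = \<zeta> i j (P \<delta> (srt a ! i) (srt b ! j))"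
    using n fb fa unfolding sat_def a_def by simp
  ultimately show ?thesis using aA bA by blast
qed

lemma rect:
  assumes om: "omega1_type TYPE('a::wellorder)"
    and T: "\<forall>c \<delta> Z. (\<forall>n. finite (c n)) \<longrightarrow> (\<exists>\<eta>. T \<eta> = (c, \<delta>, Z))"
    and A: "infinite (A :: 'a set)" and B: "uncountable B"
  shows "\<exists>\<alpha>\<in>A. \<exists>\<beta>\<in>B. \<alpha> < \<beta> \<and> fcol P T \<beta> \<alpha> = \<zeta> (P \<delta> \<alpha> \<beta>)"
proof -
  obtain e :: "nat \<Rightarrow> 'a" where ei: "inj e" and er: "range e \<subseteq> A"
    using infinite_countable_subset A by blast
  define c where "c n = {e n}" for n
  have good: "goodc c" unfolding goodc_def c_def using ei by (auto simp: inj_eq)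
  obtain \<gamma> where g1: "\<forall>n. \<forall>x\<in>c n. x < \<gamma>" and g2: "\<forall>b. sorted_wrt (<) b \<longrightarrow> (\<forall>\<beta>\<in>set b. \<gamma> < \<beta>) \<longrightarrow>
           (\<exists>n. \<forall>j<length b. sat P (fcol P T) c \<delta> (\<lambda>n i j. \<zeta>) n j (b ! j))"
    using key[OF om T good, of P \<delta> "\<lambda>n i j. \<zeta>"] by blast
  obtain \<beta> where \<beta>: "\<beta> \<in> B" "\<gamma> < \<beta>" using om_above[OF om B] by blast
  obtain n where "sat P (fcol P T) c \<delta> (\<lambda>n i j. \<zeta>) n 0 \<beta>" using g2[rule_format, of "[\<beta>]"] \<beta> by auto
  hence "fcol P T \<beta> (e n) = \<zeta> (P \<delta> (e n) \<beta>)" unfolding sat_def c_def by simp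
  moreover have "e n < \<beta>"
  proof -
    have "e n < \<gamma>" using g1 unfolding c_def by simp
    thus ?thesis using \<beta>(2) by (rule less_trans)
  qed
  ultimately show ?thesis using er \<beta> by blast
qed

lemma one_rect:
  assumes om: "omega1_type TYPE('a::wellorder)"
    and T: "\<forall>c \<delta> Z. (\<forall>n. finite (c n)) \<longrightarrow> (\<exists>\<eta>. T \<eta> = (c, \<delta>, Z))"
    and A: "infinite (A :: 'a set)" and B: "uncountable B"
    and zA: "\<forall>\<alpha>\<in>A. \<forall>\<beta>\<in>B. \<alpha> < \<beta> \<longrightarrow> fcol P T \<beta> \<alpha> \<noteq> Zt \<alpha> (P \<delta> \<alpha> \<beta>)"
  shows False
proof -
  obtain e :: "nat \<Rightarrow> 'a" where ei: "inj e" and er: "range e \<subseteq> A"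
    using infinite_countable_subset A by blast
  define c where "c n = {e n}" for n
  have good: "goodc c" unfolding goodc_def c_def using ei by (auto simp: inj_eq)
  obtain \<gamma> where g1: "\<forall>n. \<forall>x\<in>c n. x < \<gamma>" and g2: "\<forall>b. sorted_wrt (<) b \<longrightarrow> (\<forall>\<beta>\<in>set b. \<gamma> < \<beta>) \<longrightarrow>
           (\<exists>n. \<forall>j<length b. sat P (fcol P T) c \<delta> (\<lambda>n i j. Zt (e n)) n j (b ! j))"
    using key[OF om T good, of P \<delta> "\<lambda>n i j. Zt (e n)"] by blast
  obtain \<beta> where \<beta>: "\<beta> \<in> B" "\<gamma> < \<beta>" using om_above[OF om B] by blast
  obtain n where "sat P (fcol P T) c \<delta> (\<lambda>n i j. Zt (e n)) n 0 \<beta>" using g2[rule_format, of "[\<beta>]"] \<beta> by auto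
  hence "fcol P T \<beta> (e n) = Zt (e n) (P \<delta> (e n) \<beta>)" unfolding sat_def c_def by simp
  moreover have "e n < \<beta>"
  proof -
    have "e n < \<gamma>" using g1 unfolding c_def by simp
    thus ?thesis using \<beta>(2) by (rule less_trans)
  qed
  ultimately show False using er \<beta> zA by blast
qed



theorem theorem5p1:
  fixes pbar :: "'a::wellorder \<Rightarrow> 'a \<Rightarrow> 'a \<Rightarrow> nat"
  assumes "omega1_type TYPE('a)"
    and "CH TYPE('a)"
  shows "neg_sq pbar \<and> neg_rect pbar \<and> neg_one_rect pbar \<and> Pr1 pbar \<and> Pr0 pbar"
proof -
  note om = assms(1)
  obtain T :: "'a \<Rightarrow> (nat \<Rightarrow> 'a set) \<times> 'a \<times> (nat\<Rightarrow>nat\<Rightarrow>nat\<Rightarrow>nat\<Rightarrow>'a)"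
    where T: "\<forall>c \<delta> Z. (\<forall>n. finite (c n)) \<longrightarrow> (\<exists>\<eta>. T \<eta> = (c, \<delta>, Z))"
    using enc_exists[OF assms(2)] by blast
  define f where "f \<alpha> \<beta> = fcol pbar T \<beta> \<alpha>" for \<alpha> \<beta>
  have R: "strong f (pbar \<delta>) (A \<circledast> B)" if UA: "uncountable A" and UB: "uncountable B" for \<delta> A B
    unfolding strong_def
  proof
    fix \<zeta> :: "nat \<Rightarrow> 'a"
    have "infinite A" using UA countable_finite by blast
    then obtain \<alpha> \<beta> where "\<alpha> \<in> A" "\<beta> \<in> B" "\<alpha> < \<beta>" "fcol pbar T \<beta> \<alpha> = \<zeta> (pbar \<delta> \<alpha> \<beta>)"
      using rect[OF om T _ UB, of A pbar \<zeta> \<delta>] by blast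
    thus "\<exists>(\<alpha>, \<beta>)\<in>A \<circledast> B. f \<alpha> \<beta> = \<zeta> (pbar \<delta> \<alpha> \<beta>)"
      unfolding f_def circledast_def by blast
  qed
  have "neg_rect pbar" unfolding neg_rect_def using R by blast
  moreover have "neg_sq pbar" unfolding neg_sq_def using R by blast
  moreover have "neg_one_rect pbar" unfolding neg_one_rect_def
  proof (intro exI[of _ f] allI impI)
    fix \<delta> and A B :: "'a set"
    assume A: "countable A" "infinite A" and B: "uncountable B"
    show "\<exists>\<alpha>\<in>A. strong f (pbar \<delta>) ({\<alpha>} \<circledast> B)"
    proof (rule ccontr)
      assume "\<not> ?thesis"
      hence "\<forall>\<alpha>\<in>A. \<exists>\<zeta>::nat \<Rightarrow> 'a. \<forall>\<beta>\<in>B. \<alpha> < \<beta> \<longrightarrow> f \<alpha> \<beta> \<noteq> \<zeta> (pbar \<delta> \<alpha> \<beta>)"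
        unfolding strong_def circledast_def by (auto simp: Ball_def)
      then obtain Zt where "\<forall>\<alpha>\<in>A. \<forall>\<beta>\<in>B. \<alpha> < \<beta> \<longrightarrow> f \<alpha> \<beta> \<noteq> Zt \<alpha> (pbar \<delta> \<alpha> \<beta>)"
        by metis
      thus False using one_rect[OF om T A(2) B, of pbar Zt \<delta>] unfolding f_def by blast
    qed
  qed
  moreover have "Pr0 pbar" unfolding Pr0_def
  proof (intro exI[of _ f] allI impI)
    fix \<delta> :: 'a and \<xi> :: nat and \<A> :: "'a set set" and \<zeta> :: "nat \<Rightarrow> nat \<Rightarrow> nat \<Rightarrow> 'a"
    assume fk: "\<forall>a\<in>\<A>. finite a \<and> card a = \<xi>" and disj: "\<forall>a\<in>\<A>. \<forall>b\<in>\<A>. a \<noteq> b \<longrightarrow> a \<inter> b = {}"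
      and unc: "uncountable \<A>"
    have "0 < \<xi>"
    proof (rule ccontr)
      assume "\<not> 0 < \<xi>"
      hence "\<A> \<subseteq> {{}}" using fk by auto
      thus False using unc countable_subset by (metis countable_finite finite.emptyI finite_insert)
    qed
    from pr0gen[OF om T unc disj fk this, of pbar \<zeta> \<delta>]
    show "\<exists>a\<in>\<A>. \<exists>b\<in>\<A>. Max a < Min b \<and> (\<forall>i<\<xi>. \<forall>j<\<xi>.
            f (srt a ! i) (srt b ! j) = \<zeta> i j (pbar \<delta> (srt a ! i) (srt b ! j)))"
      unfolding f_def by blast
  qed
  moreover have "Pr1 pbar" unfolding Pr1_def
  proof (intro exI[of _ f] allI impI)
    fix \<delta> :: 'a and \<xi> :: nat and \<A> :: "'a set set" and \<zeta> :: "nat \<Rightarrow> 'a"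
    assume fk: "\<forall>a\<in>\<A>. finite a \<and> card a < \<xi> \<and> a \<noteq> {}" and disj: "\<forall>a\<in>\<A>. \<forall>b\<in>\<A>. a \<noteq> b \<longrightarrow> a \<inter> b = {}"
      and unc: "uncountable \<A>"
    have "\<A> = (\<Union>k\<in>{..<\<xi>}. {a\<in>\<A>. card a = k})" using fk by auto
    then obtain k where k: "k < \<xi>" "uncountable {a\<in>\<A>. card a = k}"
      using unc by (metis (no_types, lifting) countable_UN countable_finite finite_lessThan lessThan_iff)
    define \<A>' where "\<A>' = {a\<in>\<A>. card a = k}"
    have unc': "uncountable \<A>'" using k \<A>'_def by simp
    have disj': "\<forall>a\<in>\<A>'. \<forall>b\<in>\<A>'. a \<noteq> b \<longrightarrow> a \<inter> b = {}" using disj \<A>'_def by auto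
    have fk': "\<forall>a\<in>\<A>'. finite a \<and> card a = k" using fk \<A>'_def by auto
    have "\<A>' \<noteq> {}" using unc' by auto
    then obtain a0 where "a0 \<in> \<A>'" by blast
    hence k0: "0 < k" using fk \<A>'_def by fastforce
    obtain a b where ab: "a \<in> \<A>'" "b \<in> \<A>'" "Max a < Min b"
      and m: "\<forall>i<k. \<forall>j<k. fcol pbar T (srt b ! j) (srt a ! i) = \<zeta> (pbar \<delta> (srt a ! i) (srt b ! j))"
      using pr0gen[OF om T unc' disj' fk' k0, of pbar "\<lambda>i j. \<zeta>" \<delta>] by blast
    have "\<forall>\<alpha>\<in>a. \<forall>\<beta>\<in>b. f \<alpha> \<beta> = \<zeta> (pbar \<delta> \<alpha> \<beta>)"
    proof (intro ballI)
      fix \<alpha> \<beta> assume "\<alpha> \<in> a" "\<beta> \<in> b"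
      moreover have "finite a" "card a = k" "finite b" "card b = k" using fk' ab by auto
      ultimately obtain i j where "i < k" "srt a ! i = \<alpha>" "j < k" "srt b ! j = \<beta>"
        by (metis in_set_conv_nth sorted_list_of_set.length_sorted_key_list_of_set
              sorted_list_of_set.set_sorted_key_list_of_set)
      thus "f \<alpha> \<beta> = \<zeta> (pbar \<delta> \<alpha> \<beta>)" using m unfolding f_def by blast
    qed
    thus "\<exists>a\<in>\<A>. \<exists>b\<in>\<A>. Max a < Min b \<and> (\<forall>\<alpha>\<in>a. \<forall>\<beta>\<in>b. f \<alpha> \<beta> = \<zeta> (pbar \<delta> \<alpha> \<beta>))"
      using ab \<A>'_def by blast
  qed
  ultimately show ?thesis by blast
qed


end
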